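(* Let $\mathbf x_1,\dots,\mathbf x_n\in\mathbb R^d$ be distinct points, let $f\colon(0,\infty)\to\mathbb R$ be differentiable, and let $J\colon\mathbb R^n\to\mathbb R$ be a symmetric function that is differentiable at $\lambda(W^{\mathbf x})$. Then the gradient of $\mathbf x\mapsto J(\lambda(W^{\mathbf x}))$ with respect to $\mathbf x_i$ is $$\nabla_{\mathbf x_i}\big(J\circ\lambda\circ W^{\mathbf x}\big)=4\sum_{k\ne i}\big(U\,\mathrm{diag}(\nabla J(\lambda))\,U^t\big)_{ik}\, f'\big(|\mathbf x_i-\mathbf x_k|^2\big)\,(\mathbf x_i-\mathbf x_k)$$ for any orthogonal matrix $U\in O(n)$ satisfying $W^{\mathbf x}=U\,\mathrm{diag}(\lambda(W^{\mathbf x}))\,U^t$, where $\nabla J(\lambda)$ is evaluated at $\lambda=\lambda(W^{\mathbf x})$.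
   Context: $W^{\mathbf x}$ is the $n\times n$ symmetric matrix with $W^{\mathbf x}_{ij}=f(|\mathbf x_i-\mathbf x_j|^2)$ for $i\ne j$ (Euclidean distance) and $W^{\mathbf x}_{ii}=0$. For a real symmetric matrix $A$, $\lambda(A)\in\mathbb R^n$ denotes the vector of its eigenvalues in non-decreasing order. A function $J\colon\mathbb R^n\to\mathbb R$ is symmetric if $J(x)$ is invariant under permutations of the components of $x$. *)

theory Defs
  imports "HOL-Analysis.Analysis" "HOL-Computational_Algebra.Polynomial"
begin

definition diag_mat :: "real ^ 'n \<Rightarrow> real ^ 'n ^ 'n" where
  "diag_mat v = (\<chi> i j. if i = j then v $ j else 0)"

definition charpoly :: "real ^ 'n ^ 'n \<Rightarrow> real poly" where
  "charpoly A = det (\<chi> i j. (if i = j then [:0, 1:] else 0) - [:A $ i $ j:])"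

definition eigvals :: "real ^ ('n :: {finite, linorder}) ^ ('n :: {finite, linorder}) \<Rightarrow> real ^ ('n :: {finite, linorder})" where
  "eigvals A = (THE l. (\<forall>i j. i \<le> j \<longrightarrow> l $ i \<le> l $ j) \<and>
      (\<forall>c. card {j. l $ j = c} = order c (charpoly A)))"

text \<open>W^x: rows of x are the points x_1..x_n in R^d.\<close>
definition Wmat :: "(real \<Rightarrow> real) \<Rightarrow> real ^ 'd ^ 'n \<Rightarrow> real ^ 'n ^ 'n" where
  "Wmat f x = (\<chi> i j. if i = j then 0 else f ((norm (x $ i - x $ j))\<^sup>2))"

definition symmetric_fun :: "(real ^ 'n \<Rightarrow> real) \<Rightarrow> bool" where
  "symmetric_fun J \<longleftrightarrow> (\<forall>p l. p permutes UNIV \<longrightarrow> J (\<chi> j. l $ p j) = J l)"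

end

theory Submission
  imports Defs "HOL-Combinatorics.Permutations"
begin

lemma fiber_perm:
  fixes g1 g2 :: "'n::finite \<Rightarrow> 'a"
  assumes "\<And>c. card {j. g1 j = c} = card {k. g2 k = c}"
  shows "\<exists>p. p permutes UNIV \<and> (\<forall>j. g2 (p j) = g1 j)"
proof -
  have "\<forall>c. \<exists>h. bij_betw h {j. g1 j = c} {k. g2 k = c}"
    using assms by (intro allI finite_same_card_bij) auto
  then obtain h where h: "\<And>c. bij_betw (h c) {j. g1 j = c} {k. g2 k = c}" by metis
  define p where "p j = h (g1 j) j" for j
  have pv: "g2 (p j) = g1 j" for j
    using bij_betwE[OF h[of "g1 j"]] unfolding p_def by auto
  have "inj p"
  proof (rule injI)
    fix j k assume "p j = p k"
    then have e: "g1 j = g1 k" using pv by metis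
    then have "h (g1 j) j = h (g1 j) k" using \<open>p j = p k\<close> unfolding p_def by simp
    then show "j = k" using bij_betw_imp_inj_on[OF h[of "g1 j"]] e
      by (auto dest: inj_onD)
  qed
  then have "bij p" using finite_UNIV_inj_surj[of p] by (simp add: bij_def)
  then have "p permutes UNIV" by (intro bij_imp_permutes) auto
  then show ?thesis using pv by blast
qed

definition sortedv :: "real ^ ('n::{finite,linorder}) \<Rightarrow> bool" where
  "sortedv l \<longleftrightarrow> (\<forall>i j. i \<le> j \<longrightarrow> l $ i \<le> l $ j)"

lemma card_le_eq_sum:
  fixes l :: "real ^ ('n::finite)"
  assumes "finite T" "range (($) l) \<subseteq> T"
  shows "card {k. l $ k \<le> c} = (\<Sum>v\<in>T. if v \<le> c then card {k. l $ k = v} else 0)"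
proof -
  have "card {k. l $ k \<le> c} = (\<Sum>k\<in>UNIV. if l $ k \<le> c then 1 else (0::nat))"
    by (simp add: sum.If_cases)
  also have "\<dots> = (\<Sum>v\<in>T. \<Sum>k\<in>{k\<in>UNIV. l $ k = v}. if l $ k \<le> c then 1 else (0::nat))"
    by (rule sum.group[symmetric]) (use assms in auto)
  also have "\<dots> = (\<Sum>v\<in>T. if v \<le> c then card {k. l $ k = v} else 0)"
    by (intro sum.cong refl) auto
  finally show ?thesis .
qed

lemma sorted_unique:
  fixes l l' :: "real ^ ('n::{finite,linorder})"
  assumes s: "sortedv l" "sortedv l'" and c: "\<And>c. card {j. l $ j = c} = card {j. l' $ j = c}"
  shows "l = l'"
proof -
  define T where "T = range (($) l) \<union> range (($) l')"
  have N: "card {k. l $ k \<le> c} = card {k. l' $ k \<le> c}" for c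
  proof -
    have "finite T" unfolding T_def by auto
    then show ?thesis using card_le_eq_sum[of T l c] card_le_eq_sum[of T l' c] c unfolding T_def
      by (metis (no_types, lifting) sum.cong sup_ge1 sup_ge2)
  qed
  have less: False if s1: "sortedv a" and s2: "sortedv b" and lt: "a $ j < b $ j"
     and N': "card {k. a $ k \<le> a $ j} = card {k. b $ k \<le> a $ j}" for a b j
  proof -
    have "{k. k \<le> j} \<subseteq> {k. a $ k \<le> a $ j}" using s1 unfolding sortedv_def by auto
    then have 1: "card {k. k \<le> j} \<le> card {k. a $ k \<le> a $ j}" by (intro card_mono) auto
    have "{k. b $ k \<le> a $ j} \<subseteq> {k. k < j}"
    proof
      fix k assume "k \<in> {k. b $ k \<le> a $ j}"
      then have "b $ k \<le> a $ j" by simp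
      show "k \<in> {k. k < j}"
      proof (rule ccontr)
        assume "k \<notin> {k. k < j}" then have "j \<le> k" by auto
        then have "b $ j \<le> b $ k" using s2 unfolding sortedv_def by auto
        then show False using lt \<open>b $ k \<le> a $ j\<close> by auto
      qed
    qed
    then have 2: "card {k. b $ k \<le> a $ j} \<le> card {k. k < j}" by (intro card_mono) auto
    have "{k. k < j} \<subset> {k. k \<le> j}" by auto
    then have "card {k. k < j} < card {k. k \<le> j}" by (intro psubset_card_mono) auto
    then show False using 1 2 N' by linarith
  qed
  show ?thesis
  proof (rule vec_eq_iff[THEN iffD2, rule_format])
    fix j
    show "l $ j = l' $ j"
    proof (cases "l $ j < l' $ j")
      case True then show ?thesis using less[OF s True] N by auto
    next
      case False
      show ?thesis
      proof (rule ccontr)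
        assume "l $ j \<noteq> l' $ j"
        then have "l' $ j < l $ j" using False by auto
        then show False using less[OF s(2) s(1)] N by metis
      qed
    qed
  qed
qed

lemma sorted_exists:
  fixes \<nu> :: "real ^ ('n::{finite,linorder})"
  shows "\<exists>p. p permutes UNIV \<and> sortedv (\<chi> j. \<nu> $ p j)"
proof -
  define xs where "xs = sorted_list_of_set (UNIV :: 'n set)"
  have sxs: "sorted_wrt (<) xs" unfolding xs_def by (rule strict_sorted_list_of_set)
  have dxs: "distinct xs" and setxs: "set xs = UNIV" unfolding xs_def by auto
  define n where "n = length xs"
  have bxs: "bij_betw ((!) xs) {..<n} UNIV" using bij_betw_nth[OF dxs] setxs n_def by auto
  define vs where "vs = sort (map (($) \<nu>) xs)"
  have "mset vs = mset (map (($) \<nu>) xs)" unfolding vs_def by simp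
  then obtain q where q: "q permutes {..<length (map (($) \<nu>) xs)}"
     "permute_list q (map (($) \<nu>) xs) = vs"
    by (rule mset_eq_permutation)
  have qn: "q permutes {..<n}" using q(1) n_def by simp
  have vsn: "vs ! m = \<nu> $ (xs ! q m)" if "m < n" for m
  proof -
    have "vs ! m = permute_list q (map (($) \<nu>) xs) ! m" using q(2) by simp
    also have "\<dots> = map (($) \<nu>) xs ! q m" using that n_def q(1) by (simp add: permute_list_nth)
    also have "\<dots> = \<nu> $ (xs ! q m)" using permutes_in_image[OF qn] that n_def by simp
    finally show ?thesis .
  qed
  define \<iota> where "\<iota> = the_inv_into {..<n} ((!) xs)"
  have bi: "bij_betw \<iota> UNIV {..<n}" unfolding \<iota>_def by (rule bij_betw_the_inv_into[OF bxs])
  have xi: "xs ! (\<iota> j) = j" for j unfolding \<iota>_def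
    by (rule f_the_inv_into_f_bij_betw[OF bxs]) auto
  have iln: "\<iota> j < n" for j using bij_betwE[OF bi] by auto
  define p where "p = (\<lambda>j. xs ! q (\<iota> j))"
  have bq: "bij_betw q {..<n} {..<n}" using permutes_imp_bij[OF qn] .
  have "bij_betw p UNIV UNIV" unfolding p_def
    using bij_betw_trans[OF bi bij_betw_trans[OF bq bxs]] by (simp add: comp_def)
  then have pp: "p permutes UNIV" by (intro bij_imp_permutes) auto
  have mono: "\<iota> j \<le> \<iota> k" if "j \<le> k" for j k
  proof (rule ccontr)
    assume "\<not> \<iota> j \<le> \<iota> k"
    then have "xs ! (\<iota> k) < xs ! (\<iota> j)" using sorted_wrt_nth_less[OF sxs] iln n_def by auto
    then show False using xi that by (metis leD)
  qed
  have "sorted vs" unfolding vs_def by simp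
  have lvs: "length vs = n" unfolding vs_def n_def by simp
  have "sortedv (\<chi> j. \<nu> $ p j)"
    unfolding sortedv_def
  proof (intro allI impI)
    fix i j :: 'n assume "i \<le> j"
    have "vs ! \<iota> i \<le> vs ! \<iota> j" using \<open>sorted vs\<close> mono[OF \<open>i \<le> j\<close>] iln lvs
      by (simp add: sorted_iff_nth_mono)
    then show "(\<chi> j. \<nu> $ p j) $ i \<le> (\<chi> j. \<nu> $ p j) $ j"
      using vsn iln unfolding p_def by simp
  qed
  then show ?thesis using pp by blast
qed

lemma symm_inner:
  fixes A :: "real^'n^'n"
  assumes "transpose A = A"
  shows "(A *v x) \<bullet> y = x \<bullet> (A *v y)"
proof -
  have Aij: "A$i$j = A$j$i" for i j
  proof -
    have "transpose A $ j $ i = A $ i $ j" by (simp add: transpose_def)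
    then show ?thesis using assms by simp
  qed
  have "(A *v x) \<bullet> y = (\<Sum>i\<in>UNIV. (\<Sum>j\<in>UNIV. A$i$j * x$j) * y$i)"
    by (simp add: inner_vec_def matrix_vector_mult_def)
  also have "\<dots> = (\<Sum>i\<in>UNIV. \<Sum>j\<in>UNIV. A$i$j * x$j * y$i)"
    by (simp add: sum_distrib_right)
  also have "\<dots> = (\<Sum>j\<in>UNIV. \<Sum>i\<in>UNIV. A$i$j * x$j * y$i)"
    by (rule sum.swap)
  also have "\<dots> = (\<Sum>j\<in>UNIV. x$j * (\<Sum>i\<in>UNIV. A$j$i * y$i))"
    by (simp add: sum_distrib_left mult_ac Aij)
  also have "\<dots> = x \<bullet> (A *v y)"
    by (simp add: inner_vec_def matrix_vector_mult_def)
  finally show ?thesis .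
qed

lemma quad_zero:
  fixes a K :: real
  assumes "\<And>t. 2*t*a \<le> t^2 * K"
  shows "a = 0"
proof -
  define r where "r = \<bar>K\<bar> + 1"
  define t where "t = a / r"
  have pos: "r > 0" unfolding r_def by simp
  have ts: "t * r = a" unfolding t_def using pos by simp
  have "2*t*a \<le> t^2 * K" by (rule assms)
  then have "2*t*a*r^2 \<le> t^2 * K*r^2" using pos by (intro mult_right_mono) auto
  moreover have "2*t*a*r^2 = 2*a*a*r" "t^2 * K*r^2 = a*a*K"
    unfolding ts[symmetric] by (simp_all add: power2_eq_square mult_ac)
  ultimately have "2*a*a*(\<bar>K\<bar>+1) \<le> a*a*K" unfolding r_def by simp
  moreover have "a*a*K \<le> a*a*\<bar>K\<bar>" by (intro mult_left_mono) auto
  ultimately have "a*a*(\<bar>K\<bar>+2) \<le> 0" by (simp add: algebra_simps)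
  moreover have "\<bar>K\<bar>+2 > 0" by simp
  ultimately have "a*a \<le> 0" by (simp add: mult_le_0_iff)
  then show ?thesis by (auto simp: mult_le_0_iff)
qed

lemma max_eigvec:
  fixes A :: "real^'n^'n"
  assumes sym: "transpose A = A" and S: "subspace S" and inv: "\<forall>x\<in>S. A *v x \<in> S"
    and v: "v \<in> S" "norm v = 1"
    and max: "\<forall>y\<in>S \<inter> sphere 0 1. y \<bullet> (A *v y) \<le> v \<bullet> (A *v v)"
  shows "A *v v = (v \<bullet> (A *v v)) *\<^sub>R v"
proof -
  define q where "q y = y \<bullet> (A *v y)" for y
  have qscale: "q (c *\<^sub>R y) = c^2 * q y" for c y
    unfolding q_def by (simp add: matrix_vector_mult_scaleR power2_eq_square)
  have qle: "q u \<le> q v * (norm u)^2" if "u \<in> S" for u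
  proof (cases "u = 0")
    case True then show ?thesis by (simp add: q_def)
  next
    case False
    have "(1/norm u) *\<^sub>R u \<in> S \<inter> sphere 0 1" using that False S
      by (simp add: subspace_scale)
    then have "q ((1/norm u) *\<^sub>R u) \<le> q v" using max unfolding q_def by blast
    then have "q u / (norm u)^2 \<le> q v" by (simp add: qscale power_divide)
    then show ?thesis using False by (simp add: divide_le_eq)
  qed
  have orth0: "w \<bullet> (A *v v) = 0" if w: "w \<in> S" "w \<bullet> v = 0" for w
  proof (rule quad_zero[where K = "q v * (norm w)^2 - q w"])
    fix t :: real
    have u: "v + t *\<^sub>R w \<in> S" using S v w by (simp add: subspace_add subspace_scale)
    have "q (v + t *\<^sub>R w) = q v + 2 * t * (w \<bullet> (A *v v)) + t^2 * q w"
    proof -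
      have "(A *v w) \<bullet> v = w \<bullet> (A *v v)" by (rule symm_inner[OF sym])
      moreover have "(v + t *\<^sub>R w) \<bullet> (A *v (v + t *\<^sub>R w)) =
          v \<bullet> (A *v v) + t * (v \<bullet> (A *v w)) + t * (w \<bullet> (A *v v)) + t * t * (w \<bullet> (A *v w))"
        by (simp add: matrix_vector_right_distrib matrix_vector_mult_scaleR inner_add_left
            inner_add_right ring_distribs)
      moreover have "v \<bullet> (A *v w) = (A *v w) \<bullet> v" by (rule inner_commute)
      ultimately show ?thesis unfolding q_def by (simp add: power2_eq_square)
    qed
    moreover have "(norm (v + t *\<^sub>R w))^2 = 1 + t^2 * (norm w)^2"
    proof -
      have "(norm (v + t *\<^sub>R w))^2 = v \<bullet> v + 2 * t * (w \<bullet> v) + t * t * (w \<bullet> w)"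
        by (simp add: power2_norm_eq_inner inner_add_left inner_add_right inner_commute[of v w] ring_distribs)
      moreover have "w \<bullet> w = (norm w)^2" by (simp add: power2_norm_eq_inner)
      moreover have "v \<bullet> v = 1" using v by (simp add: norm_eq_1)
      ultimately show ?thesis using w by (simp add: power2_eq_square)
    qed
    ultimately show "2 * t * (w \<bullet> (A *v v)) \<le> t^2 * (q v * (norm w)^2 - q w)"
      using qle[OF u] by (simp add: algebra_simps)
  qed
  define w where "w = A *v v - q v *\<^sub>R v"
  have wS: "w \<in> S" unfolding w_def using S v inv by (simp add: subspace_diff subspace_scale)
  have vv: "v \<bullet> v = 1" using v by (simp add: norm_eq_1)
  have wv: "w \<bullet> v = 0" unfolding w_def q_def using vv by (simp add: inner_diff_left inner_diff_right inner_commute)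
  have "w \<bullet> w = w \<bullet> (A *v v) - q v * (w \<bullet> v)" unfolding w_def by (simp add: inner_diff_right)
  also have "\<dots> = 0" using orth0[OF wS wv] wv by simp
  finally have "w = 0" by simp
  then show ?thesis unfolding w_def q_def by simp
qed

lemma eig_basis_sub:
  fixes A :: "real^'n^'n"
  assumes sym: "transpose A = A"
  shows "subspace S \<Longrightarrow> \<forall>x\<in>S. A *v x \<in> S \<Longrightarrow>
    \<exists>B. B \<subseteq> S \<and> pairwise orthogonal B \<and> (\<forall>b\<in>B. norm b = 1 \<and> (\<exists>c. A *v b = c *\<^sub>R b))
        \<and> span B = S"
proof (induction "dim S" arbitrary: S rule: less_induct)
  case less
  show ?case
  proof (cases "S = {0}")
    case True
    then show ?thesis by (intro exI[of _ "{}"]) auto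
  next
    case False
    then obtain x where x: "x \<in> S" "x \<noteq> 0" using less.prems subspace_0 by blast
    have ne: "S \<inter> sphere 0 1 \<noteq> {}"
    proof -
      have "(1/norm x) *\<^sub>R x \<in> S \<inter> sphere 0 1" using x less.prems(1) by (simp add: subspace_scale)
      then show ?thesis by blast
    qed
    have cpt: "compact (S \<inter> sphere 0 1)"
      using less.prems(1) by (intro closed_Int_compact closed_subspace) auto
    have cont: "continuous_on (S \<inter> sphere 0 1) (\<lambda>y. y \<bullet> (A *v y))"
      by (intro continuous_intros matrix_vector_mult_linear_continuous_on)
    obtain v where vm: "v \<in> S \<inter> sphere 0 1" "\<forall>y\<in>S \<inter> sphere 0 1. y \<bullet> (A *v y) \<le> v \<bullet> (A *v v)"
      using continuous_attains_sup[OF cpt ne cont] by blast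
    have vS: "v \<in> S" and nv: "norm v = 1" using vm by auto
    have eig: "A *v v = (v \<bullet> (A *v v)) *\<^sub>R v"
      by (rule max_eigvec[OF sym less.prems vS nv vm(2)])
    define S' where "S' = S \<inter> {y. v \<bullet> y = 0}"
    have sub': "subspace S'" unfolding S'_def using less.prems(1)
      by (auto simp: subspace_def inner_add_right)
    have inv': "\<forall>y\<in>S'. A *v y \<in> S'"
    proof
      fix y assume y: "y \<in> S'"
      have "v \<bullet> (A *v y) = (A *v v) \<bullet> y" using symm_inner[OF sym] by simp
      also have "\<dots> = 0" using y eig unfolding S'_def by (metis (mono_tags) inner_scaleR_left mem_Collect_eq IntD2 mult_zero_right)
      finally show "A *v y \<in> S'" using y less.prems(2) unfolding S'_def by auto
    qed
    have vv: "v \<bullet> v = 1" using nv by (simp add: norm_eq_1)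
    have "v \<notin> S'" unfolding S'_def using vv by auto
    then have "S' \<subset> S" unfolding S'_def using vS by blast
    then have "dim S' < dim S" using sub' less.prems(1)
      by (metis dim_psubset span_eq_iff)
    from less.hyps[OF this sub' inv'] obtain B' where B': "B' \<subseteq> S'" "pairwise orthogonal B'"
      "\<forall>b\<in>B'. norm b = 1 \<and> (\<exists>c. A *v b = c *\<^sub>R b)" "span B' = S'" by blast
    have vB': "v \<notin> B'" using B'(1) vv unfolding S'_def by auto
    have BS: "insert v B' \<subseteq> S" using B'(1) vS unfolding S'_def by auto
    have po: "pairwise orthogonal (insert v B')"
      using B'(1,2) unfolding S'_def pairwise_insert orthogonal_def by (auto simp: inner_commute)
    have Ssp: "S \<subseteq> span (insert v B')"
    proof
      fix y assume y: "y \<in> S"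
      have "y - (v \<bullet> y) *\<^sub>R v \<in> S'" unfolding S'_def using y vS vv less.prems(1)
        by (simp add: subspace_diff subspace_scale inner_diff_right)
      then have "y - (v \<bullet> y) *\<^sub>R v \<in> span (insert v B')" using B'(4) span_mono[of B' "insert v B'"] by auto
      moreover have "(v \<bullet> y) *\<^sub>R v \<in> span (insert v B')" by (simp add: span_base span_mul)
      ultimately have "y - (v \<bullet> y) *\<^sub>R v + (v \<bullet> y) *\<^sub>R v \<in> span (insert v B')" by (rule span_add)
      then show "y \<in> span (insert v B')" by simp
    qed
    show ?thesis
      apply (rule exI[of _ "insert v B'"])
      using BS po B'(3) nv eig Ssp span_subspace[OF BS Ssp less.prems(1)] by auto
  qed
qed

lemma spectral:
  fixes A :: "real^'n^'n"
  assumes sym: "transpose A = A"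
  shows "\<exists>Q \<nu>. orthogonal_matrix Q \<and> A = Q ** diag_mat \<nu> ** transpose Q"
proof -
  obtain B where B: "pairwise orthogonal B" "\<forall>b\<in>B. norm b = 1 \<and> (\<exists>c. A *v b = c *\<^sub>R b)"
    "span B = UNIV"
    using eig_basis_sub[OF sym, of UNIV] by auto
  have ind: "independent B" using B(1,2) by (intro pairwise_orthogonal_independent) auto
  have fin: "finite B" and cB: "card B = dim (UNIV :: (real^'n) set)"
    using indep_card_eq_dim_span[OF ind] B(3) by auto
  have "card B = card (UNIV :: 'n set)" using cB by simp
  then obtain b where bb: "bij_betw b (UNIV::'n set) B"
    using finite_same_card_bij[of "UNIV::'n set" B] fin by auto
  have bB: "b j \<in> B" for j using bij_betwE[OF bb] by auto
  have "\<forall>j. \<exists>c. A *v b j = c *\<^sub>R b j" using B(2) bB by blast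
  then obtain c where c: "\<And>j. A *v b j = c j *\<^sub>R b j" by metis
  define Q where "Q = (\<chi> i j. b j $ i)"
  define \<nu> where "\<nu> = (\<chi> j. c j)"
  have colQ: "column j Q = b j" for j unfolding Q_def column_def by simp
  have oQ: "orthogonal_matrix Q"
    unfolding orthogonal_matrix_orthonormal_columns colQ
  proof (intro conjI allI impI)
    fix i show "norm (b i) = 1" using B(2) bB by auto
  next
    fix i j :: 'n assume "i \<noteq> j"
    then have "b i \<noteq> b j" using bij_betw_imp_inj_on[OF bb] by (auto dest: inj_onD)
    then show "orthogonal (b i) (b j)" using B(1) bB unfolding pairwise_def by auto
  qed
  have AQ: "A ** Q = Q ** diag_mat \<nu>"
  proof -
    have "(A ** Q) $ i $ j = (Q ** diag_mat \<nu>) $ i $ j" for i j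
    proof -
      have "(A ** Q) $ i $ j = (A *v b j) $ i"
        unfolding Q_def matrix_matrix_mult_def matrix_vector_mult_def by simp
      also have "\<dots> = c j * b j $ i" using c by simp
      also have "\<dots> = (Q ** diag_mat \<nu>) $ i $ j"
        unfolding Q_def \<nu>_def matrix_matrix_mult_def diag_mat_def
        by (simp add: if_distrib[of "\<lambda>x. _ * x"] sum.delta' cong: if_cong)
      finally show ?thesis .
    qed
    then show ?thesis by (simp add: vec_eq_iff)
  qed
  have "A = A ** (Q ** transpose Q)" using oQ unfolding orthogonal_matrix_def by simp
  also have "\<dots> = Q ** diag_mat \<nu> ** transpose Q" by (simp add: matrix_mul_assoc AQ)
  finally show ?thesis using oQ by blast
qed

lemma const_poly_add: "[:a + b:] = [:a:] + [:b::'a::comm_monoid_add:]"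
  by (metis add_pCons add.right_neutral)

lemma const_poly_sum: "[:sum f S:] = (\<Sum>x\<in>S. [:f x:])"
  by (induction S rule: infinite_finite_induct) (auto simp: const_poly_add)

definition PM :: "real^'n^'m \<Rightarrow> real poly^'n^'m" where
  "PM X = (\<chi> i j. [:X$i$j:])"

lemma PM_mult: "PM (X ** Y) = PM X ** PM Y"
  unfolding PM_def matrix_matrix_mult_def by (simp add: const_poly_sum vec_eq_iff mult.commute)

lemma PM_1: "PM (mat 1 :: real^'n^'n) = mat 1"
  unfolding PM_def mat_def by (simp add: vec_eq_iff)

lemma mat_sub_ldistrib: "(A::'a::ring_1^'n^'m) ** (B - C) = A ** B - A ** C"
  by (simp add: matrix_matrix_mult_def vec_eq_iff sum_subtractf right_diff_distrib)

lemma mat_sub_rdistrib: "((B - C) ** (A::'a::ring_1^'n^'m)) = B ** A - C ** A"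
  by (simp add: matrix_matrix_mult_def vec_eq_iff sum_subtractf left_diff_distrib)

definition TM :: "real poly^'n^'n" where
  "TM = (\<chi> i j. if i = j then [:0,1:] else 0)"

lemma TM_comm: "PM X ** TM = TM ** PM (X :: real^'n^'n)"
  unfolding PM_def TM_def matrix_matrix_mult_def
  by (simp add: vec_eq_iff if_distrib[of "\<lambda>x. _ * x"] if_distrib[of "\<lambda>x. x * _"] sum.delta sum.delta' mult.commute cong: if_cong)

lemma charpoly_PM: "charpoly A = det (TM - PM A)"
  unfolding charpoly_def TM_def PM_def by (rule arg_cong[where f=det]) (simp add: vec_eq_iff)

lemma charpoly_diag:
  fixes Q :: "real^'n^'n"
  assumes oQ: "orthogonal_matrix Q" and A: "A = Q ** diag_mat \<nu> ** transpose Q"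
  shows "charpoly A = (\<Prod>j\<in>UNIV. [:- (\<nu>$j), 1:])"
proof -
  have QQ: "Q ** transpose Q = mat 1" "transpose Q ** Q = mat 1" using oQ unfolding orthogonal_matrix_def by auto
  have "PM Q ** TM ** PM (transpose Q) = (TM ** PM Q) ** PM (transpose Q)"
    by (simp only: TM_comm)
  also have "\<dots> = TM ** (PM Q ** PM (transpose Q))"
    by (simp only: matrix_mul_assoc)
  also have "\<dots> = TM" by (simp add: PM_mult[symmetric] QQ PM_1)
  finally have T: "PM Q ** TM ** PM (transpose Q) = TM" .
  have PA: "PM A = PM Q ** PM (diag_mat \<nu>) ** PM (transpose Q)" unfolding A by (simp only: PM_mult)
  have "PM Q ** (TM - PM (diag_mat \<nu>)) ** PM (transpose Q) =
      PM Q ** TM ** PM (transpose Q) - PM Q ** PM (diag_mat \<nu>) ** PM (transpose Q)"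
    by (simp only: mat_sub_ldistrib mat_sub_rdistrib matrix_mul_assoc)
  then have "TM - PM A = PM Q ** (TM - PM (diag_mat \<nu>)) ** PM (transpose Q)"
    unfolding T PA by simp
  then have e1: "det (TM - PM A) = det (PM Q) * det (TM - PM (diag_mat \<nu>)) * det (PM (transpose Q))"
    by (simp only: det_mul)
  have d1: "det (PM Q) * det (PM (transpose Q)) = 1"
  proof -
    have "det (PM Q) * det (PM (transpose Q)) = det (PM Q ** PM (transpose Q))" by (simp only: det_mul)
    also have "\<dots> = det (PM (mat 1 :: real^'n^'n))" by (simp only: PM_mult[symmetric] QQ)
    also have "\<dots> = 1" by (simp only: PM_1 det_I)
    finally show ?thesis .
  qed
  have d2: "det (TM - PM (diag_mat \<nu>)) = (\<Prod>j\<in>UNIV. (TM - PM (diag_mat \<nu>)) $ j $ j)"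
    by (rule det_diagonal) (simp add: TM_def PM_def diag_mat_def)
  have d3: "(TM - PM (diag_mat \<nu>)) $ j $ j = [:- (\<nu>$j), 1:]" for j
    by (simp add: TM_def PM_def diag_mat_def)
  have "det (TM - PM A) = det (TM - PM (diag_mat \<nu>)) * (det (PM Q) * det (PM (transpose Q)))"
    unfolding e1 by (simp only: ac_simps)
  then show ?thesis unfolding charpoly_PM d1 d2 d3 by simp
qed

lemma order_prod_linear:
  fixes \<nu> :: "real^'n"
  shows "order c (\<Prod>j\<in>S. [:- (\<nu>$j), 1:]) = card {j\<in>S. \<nu>$j = c}"
proof (induction S rule: infinite_finite_induct)
  case (infinite A) then show ?case by simp
next
  case empty then show ?case by simp
next
  case (insert x F)
  have f1: "[:- (\<nu>$x), 1:] \<noteq> 0" by simp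
  have f2: "(\<Prod>j\<in>F. [:- (\<nu>$j), 1:]) \<noteq> 0" using insert.hyps(1) by (subst prod_zero_iff) auto
  have nz: "[:- (\<nu>$x), 1:] * (\<Prod>j\<in>F. [:- (\<nu>$j), 1:]) \<noteq> 0"
    using f1 f2 by (metis mult_eq_0_iff)
  have e: "order c (\<Prod>j\<in>insert x F. [:- (\<nu>$j), 1:]) =
      order c [:- (\<nu>$x), 1:] + order c (\<Prod>j\<in>F. [:- (\<nu>$j), 1:])"
    by (simp only: prod.insert[OF insert.hyps] order_mult[OF nz])
  show ?case
  proof (cases "\<nu>$x = c")
    case True
    have "order c [:- (\<nu>$x), 1:] = 1" using True order_power_n_n[of c 1] by simp
    moreover have "{j\<in>insert x F. \<nu>$j = c} = insert x {j\<in>F. \<nu>$j = c}" using True by auto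
    moreover have "card (insert x {j\<in>F. \<nu>$j = c}) = Suc (card {j\<in>F. \<nu>$j = c})"
      using insert.hyps by simp
    ultimately show ?thesis using e insert.IH by simp
  next
    case False
    have "order c [:- (\<nu>$x), 1:] = 0" by (rule order_0I) (use False in simp)
    moreover have "{j\<in>insert x F. \<nu>$j = c} = {j\<in>F. \<nu>$j = c}" using False by auto
    ultimately show ?thesis using e insert.IH by simp
  qed
qed

lemma card_perm_fiber:
  fixes \<nu> :: "real^'n"
  assumes "p permutes UNIV"
  shows "card {j. \<nu> $ p j = (c::real)} = card {k. \<nu> $ k = c}"
proof -
  have "p ` {j. \<nu> $ p j = c} = {k. \<nu> $ k = c}"
  proof
    show "p ` {j. \<nu> $ p j = c} \<subseteq> {k. \<nu> $ k = c}" by auto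
    show "{k. \<nu> $ k = c} \<subseteq> p ` {j. \<nu> $ p j = c}"
    proof
      fix k assume k: "k \<in> {k. \<nu> $ k = c}"
      obtain j where "p j = k" using permutes_surj[OF assms] by (metis surjD)
      then show "k \<in> p ` {j. \<nu> $ p j = c}" using k by auto
    qed
  qed
  moreover have "inj_on p {j. \<nu> $ p j = c}" using permutes_inj[OF assms] by (simp add: inj_on_def inj_def)
  ultimately show ?thesis by (metis card_image)
qed

lemma eigvals_diag:
  fixes Q :: "real^('n::{finite,linorder})^('n::{finite,linorder})"
  assumes oQ: "orthogonal_matrix Q" and A: "A = Q ** diag_mat \<nu> ** transpose Q"
  shows "\<exists>p. p permutes UNIV \<and> eigvals A = (\<chi> j. \<nu> $ p j)"
proof -
  have ord: "order c (charpoly A) = card {j. \<nu>$j = c}" for c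
  proof -
    have "order c (charpoly A) = card {j\<in>UNIV. \<nu>$j = c}"
      unfolding charpoly_diag[OF oQ A] by (rule order_prod_linear)
    then show ?thesis by simp
  qed
  obtain p where p: "p permutes UNIV" "sortedv (\<chi> j. \<nu> $ p j)" using sorted_exists by blast
  define l0 where "l0 = (\<chi> j. \<nu> $ p j)"
  define P where "P l \<longleftrightarrow> (\<forall>i j. i \<le> j \<longrightarrow> l $ i \<le> l $ j) \<and>
      (\<forall>c. card {j. l $ j = c} = order c (charpoly A))" for l :: "real^('n::{finite,linorder})"
  have fib: "card {j. l0 $ j = c} = order c (charpoly A)" for c
    unfolding l0_def ord using card_perm_fiber[OF p(1), of \<nu> c] by simp
  have Pl: "P l0" unfolding P_def using p(2) fib unfolding sortedv_def l0_def by blast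
  have uniq: "l = l0" if "P l" for l
  proof (rule sorted_unique)
    show "sortedv l" using that unfolding P_def sortedv_def by blast
    show "sortedv l0" using p(2) unfolding l0_def .
    show "card {j. l $ j = c} = card {j. l0 $ j = c}" for c
      using that fib unfolding P_def by simp
  qed
  have "eigvals A = (THE l. P l)" by (simp only: eigvals_def P_def)
  also have "\<dots> = l0" by (rule the_equality[of P l0, OF Pl uniq])
  finally show ?thesis using p(1) unfolding l0_def by blast
qed

lemma orth_col:
  assumes "orthogonal_matrix (Q::real^'n^'n)"
  shows "(\<Sum>j\<in>UNIV. (Q$j$k)^2) = 1"
proof -
  have "(transpose Q ** Q) $ k $ k = 1" using assms unfolding orthogonal_matrix_def by (simp add: mat_def)
  then show ?thesis by (simp add: matrix_matrix_mult_def transpose_def power2_eq_square)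
qed

lemma orth_row:
  assumes "orthogonal_matrix (Q::real^'n^'n)"
  shows "(\<Sum>k\<in>UNIV. (Q$j$k)^2) = 1"
proof -
  have "(Q ** transpose Q) $ j $ j = 1" using assms unfolding orthogonal_matrix_def by (simp add: mat_def)
  then show ?thesis by (simp add: matrix_matrix_mult_def transpose_def power2_eq_square)
qed

lemma orth_le1:
  assumes "orthogonal_matrix (Q::real^'n^'n)"
  shows "\<bar>Q$j$k\<bar> \<le> 1"
proof -
  have "(Q$j$k)^2 \<le> (\<Sum>j\<in>UNIV. (Q$j$k)^2)" by (rule member_le_sum) auto
  then have "(Q$j$k)^2 \<le> 1" using orth_col[OF assms] by simp
  then show ?thesis by (simp add: abs_square_le_1)
qed

lemma eig_eq:
  assumes oQ: "orthogonal_matrix (Q::real^'n^'n)" and Y: "Y = Q ** diag_mat \<nu> ** transpose Q"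
  shows "(\<Sum>l\<in>UNIV. Y$j$l * Q$l$k) = Q$j$k * \<nu>$k"
proof -
  have "Y ** Q = Q ** diag_mat \<nu> ** (transpose Q ** Q)" unfolding Y by (simp add: matrix_mul_assoc)
  also have "\<dots> = Q ** diag_mat \<nu>" using oQ unfolding orthogonal_matrix_def by simp
  finally have "(Y ** Q) $ j $ k = (Q ** diag_mat \<nu>) $ j $ k" by simp
  then show ?thesis
    unfolding matrix_matrix_mult_def diag_mat_def
    by (simp add: if_distrib[of "\<lambda>x. _ * x"] sum.delta' cong: if_cong)
qed

lemma diag_eq:
  assumes Y: "Y = Q ** diag_mat \<nu> ** transpose (Q::real^'n^'n)"
  shows "Y$j$j = (\<Sum>k\<in>UNIV. (Q$j$k)^2 * \<nu>$k)"
  unfolding Y matrix_matrix_mult_def diag_mat_def transpose_def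
  by (simp add: if_distrib[of "\<lambda>x. _ * x"] if_distrib[of "\<lambda>x. x * _"] sum.delta' power2_eq_square mult_ac cong: if_cong)

lemma exists_big_entry:
  assumes oQ: "orthogonal_matrix (Q::real^'n^'n)"
  shows "\<exists>j. 1 / real CARD('n) \<le> \<bar>Q$j$k\<bar>"
proof (rule ccontr)
  assume "\<not> ?thesis"
  then have lt: "\<bar>Q$j$k\<bar> < 1 / real CARD('n)" for j by (meson not_le)
  have "(Q$j$k)^2 \<le> \<bar>Q$j$k\<bar>" for j
    using orth_le1[OF oQ, of j k] by (simp add: power2_eq_square abs_mult[symmetric] abs_le_square_iff)
      (metis abs_ge_zero abs_mult_self_eq mult_left_le_one_le)
  then have "(\<Sum>j\<in>UNIV. (Q$j$k)^2) < (\<Sum>j\<in>(UNIV::'n set). 1 / real CARD('n))"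
    using lt by (intro sum_strict_mono) (auto intro: le_less_trans)
  then show False using orth_col[OF oQ, of k] by simp
qed

lemma perturb:
  fixes l0 mu nu :: "real^'n" and Y Q :: "real^'n^'n"
  assumes oQ: "orthogonal_matrix Q" and Y: "Y = Q ** diag_mat nu ** transpose Q"
    and gpos: "\<gamma> > 0" and gap: "\<And>j k. l0$j \<noteq> l0$k \<Longrightarrow> \<gamma> \<le> \<bar>l0$j - l0$k\<bar>"
    and phi: "\<phi> = (\<Sum>j\<in>UNIV. \<Sum>l\<in>UNIV. \<bar>Y$j$l - (if j = l then l0$j else 0)\<bar>)"
    and small: "2 * real CARD('n) * \<phi> < \<gamma>"
    and muc: "\<And>j k. l0$j = l0$k \<Longrightarrow> mu$j = mu$k"
  shows "\<exists>p. p permutes UNIV \<and> (\<forall>j. \<bar>nu$(p j) - l0$j\<bar> \<le> real CARD('n) * \<phi>) \<and>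
     \<bar>(\<Sum>j\<in>UNIV. mu$j * nu$(p j)) - (\<Sum>j\<in>UNIV. mu$j * Y$j$j)\<bar>
       \<le> ((\<Sum>j\<in>UNIV. \<bar>l0$j\<bar>) + real CARD('n) * \<gamma>) * real CARD('n) * 8 * (\<Sum>j\<in>UNIV. \<bar>mu$j\<bar>) / \<gamma>^2 * \<phi>^2"
proof -
  define N where "N = real CARD('n)"
  have N1: "N \<ge> 1" unfolding N_def by (simp add: Suc_leI)
  define F where "F j l = Y$j$l - (if j = l then l0$j else 0)" for j l
  have phi0: "\<phi> \<ge> 0" unfolding phi by (intro sum_nonneg) auto
  have E1: "\<bar>l0$j - nu$k\<bar> * \<bar>Q$j$k\<bar> \<le> \<phi>" for j k
  proof -
    have "(\<Sum>l\<in>UNIV. Y$j$l * Q$l$k) = (\<Sum>l\<in>UNIV. F j l * Q$l$k + (if j = l then l0$j * Q$l$k else 0))"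
      unfolding F_def by (intro sum.cong) (auto simp: algebra_simps)
    also have "\<dots> = (\<Sum>l\<in>UNIV. F j l * Q$l$k) + l0$j * Q$j$k"
      by (simp add: sum.distrib)
    finally have "(l0$j - nu$k) * Q$j$k = - (\<Sum>l\<in>UNIV. F j l * Q$l$k)"
      using eig_eq[OF oQ Y, of j k] by (simp add: algebra_simps)
    then have "\<bar>l0$j - nu$k\<bar> * \<bar>Q$j$k\<bar> = \<bar>\<Sum>l\<in>UNIV. F j l * Q$l$k\<bar>" by (simp add: abs_mult[symmetric])
    also have "\<dots> \<le> (\<Sum>l\<in>UNIV. \<bar>F j l\<bar> * \<bar>Q$l$k\<bar>)" by (rule order_trans[OF sum_abs]) (simp add: abs_mult)
    also have "\<dots> \<le> (\<Sum>l\<in>UNIV. \<bar>F j l\<bar>)"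
      by (intro sum_mono) (simp add: mult_left_le orth_le1[OF oQ])
    also have "\<dots> \<le> (\<Sum>j\<in>UNIV. \<Sum>l\<in>UNIV. \<bar>F j l\<bar>)"
      by (rule member_le_sum[where f="\<lambda>j. \<Sum>l\<in>UNIV. \<bar>F j l\<bar>"]) (auto intro: sum_nonneg)
    also have "\<dots> = \<phi>" unfolding phi F_def ..
    finally show ?thesis .
  qed
  have E2: "\<exists>j. \<bar>nu$k - l0$j\<bar> \<le> N * \<phi>" for k
  proof -
    obtain j where j: "1 / N \<le> \<bar>Q$j$k\<bar>" using exists_big_entry[OF oQ] unfolding N_def by blast
    have "\<bar>l0$j - nu$k\<bar> * (1 / N) \<le> \<bar>l0$j - nu$k\<bar> * \<bar>Q$j$k\<bar>" using j by (intro mult_left_mono) auto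
    also have "\<dots> \<le> \<phi>" by (rule E1)
    finally have "\<bar>l0$j - nu$k\<bar> \<le> N * \<phi>" using N1 by (simp add: field_simps)
    then show ?thesis by (auto simp: abs_minus_commute)
  qed
  define cl where "cl k = (SOME j. \<bar>nu$k - l0$j\<bar> \<le> N * \<phi>)" for k
  have cl: "\<bar>nu$k - l0$(cl k)\<bar> \<le> N * \<phi>" for k
    unfolding cl_def using E2 by (rule someI_ex)
  have Nphi: "N * \<phi> * 2 < \<gamma>" using small unfolding N_def by simp
  define \<delta> where "\<delta> = 4 * \<phi>^2 / \<gamma>^2"
  have del0: "\<delta> \<ge> 0" unfolding \<delta>_def by simp
  have E3: "(Q$j$k)^2 \<le> \<delta>" if ne: "l0$j \<noteq> l0$(cl k)" for j k
  proof -
    have "\<gamma> \<le> \<bar>l0$j - l0$(cl k)\<bar>" by (rule gap[OF ne])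
    also have "\<dots> \<le> \<bar>l0$j - nu$k\<bar> + \<bar>nu$k - l0$(cl k)\<bar>" by (rule abs_triangle_ineq[THEN order_trans[rotated]]) simp
    finally have "\<gamma> / 2 \<le> \<bar>l0$j - nu$k\<bar>" using cl[of k] Nphi by linarith
    then have "\<gamma> / 2 * \<bar>Q$j$k\<bar> \<le> \<phi>" using E1[of j k] by (meson abs_ge_zero mult_right_mono order_trans)
    then have "\<bar>Q$j$k\<bar> \<le> 2 * \<phi> / \<gamma>" using gpos by (simp add: field_simps)
    then have "\<bar>Q$j$k\<bar>^2 \<le> (2 * \<phi> / \<gamma>)^2" by (intro power_mono) auto
    then show ?thesis unfolding \<delta>_def by (simp add: power_divide power_mult_distrib)
  qed
  have NNd: "N * N * \<delta> < 1"
  proof -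
    have "(N * \<phi> * 2)^2 < \<gamma>^2" using Nphi phi0 N1 by (intro power_strict_mono) auto
    moreover have "(N * \<phi> * 2)^2 = N * (N * (4 * \<phi>\<^sup>2))" by (simp add: power2_eq_square mult_ac)
    ultimately have "N * (N * (4 * \<phi>\<^sup>2)) < \<gamma>\<^sup>2" by simp
    then show ?thesis unfolding \<delta>_def using gpos by (simp add: field_simps)
  qed
  have E4: "card {k. l0$(cl k) = c} \<le> card {j. l0$j = c}" for c
  proof -
    define K where "K = {k. l0$(cl k) = c}"
    define Nc where "Nc = {j. l0$j = c}"
    have "(\<Sum>k\<in>K. \<Sum>j\<in>Nc. (Q$j$k)^2) = (\<Sum>j\<in>Nc. \<Sum>k\<in>K. (Q$j$k)^2)" by (rule sum.swap)
    also have "\<dots> \<le> (\<Sum>j\<in>Nc. \<Sum>k\<in>UNIV. (Q$j$k)^2)" by (intro sum_mono sum_mono2) auto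
    also have "\<dots> = real (card Nc)" using orth_row[OF oQ] by simp
    finally have S1: "(\<Sum>k\<in>K. \<Sum>j\<in>Nc. (Q$j$k)^2) \<le> real (card Nc)" .
    have S2: "1 - N * \<delta> \<le> (\<Sum>j\<in>Nc. (Q$j$k)^2)" if k: "k \<in> K" for k
    proof -
      have "1 = (\<Sum>j\<in>UNIV. (Q$j$k)^2)" using orth_col[OF oQ] by simp
      also have "\<dots> = (\<Sum>j\<in>Nc. (Q$j$k)^2) + (\<Sum>j\<in>UNIV - Nc. (Q$j$k)^2)"
        by (subst sum.subset_diff[of Nc]) auto
      also have "(\<Sum>j\<in>UNIV - Nc. (Q$j$k)^2) \<le> (\<Sum>j\<in>UNIV - Nc. \<delta>)"
        using k E3 unfolding K_def Nc_def by (intro sum_mono) auto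
      also have "\<dots> \<le> N * \<delta>" unfolding N_def using del0
        by (simp add: card_mono mult_right_mono)
      finally show ?thesis by simp
    qed
    have "real (card K) * (1 - N * \<delta>) = (\<Sum>k\<in>K. 1 - N * \<delta>)" by simp
    also have "\<dots> \<le> (\<Sum>k\<in>K. \<Sum>j\<in>Nc. (Q$j$k)^2)" using S2 by (intro sum_mono) auto
    finally have a: "real (card K) * (1 - N * \<delta>) \<le> real (card Nc)" using S1 by simp
    have "real (card K) \<le> N" unfolding N_def by (simp add: card_mono)
    then have "real (card K) * (N * \<delta>) \<le> N * (N * \<delta>)" using del0 N1 by (intro mult_right_mono) auto
    then have "real (card K) < real (card Nc) + 1" using a NNd by (simp add: algebra_simps)
    then show ?thesis unfolding K_def Nc_def by linarith
  qed
  have E5: "card {j. l0$j = c} = card {k. l0$(cl k) = c}" for c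
  proof (rule ccontr)
    assume ne: "card {j. l0$j = c} \<noteq> card {k. l0$(cl k) = c}"
    define V where "V = range (($) l0)"
    have cV: "c \<in> V"
    proof (rule ccontr)
      assume "c \<notin> V"
      then have "{j. l0$j = c} = {}" "{k. l0$(cl k) = c} = {}" unfolding V_def by auto
      then show False using ne by simp
    qed
    have g1: "(\<Sum>v\<in>V. card {j. l0$j = v}) = card (UNIV::'n set)"
      using sum.group[of UNIV V "\<lambda>j. l0$j" "\<lambda>_. 1::nat"] unfolding V_def by simp
    have g2: "(\<Sum>v\<in>V. card {k. l0$(cl k) = v}) = card (UNIV::'n set)"
      using sum.group[of UNIV V "\<lambda>k. l0$(cl k)" "\<lambda>_. 1::nat"] unfolding V_def by auto
    have "(\<Sum>v\<in>V. card {k. l0$(cl k) = v}) < (\<Sum>v\<in>V. card {j. l0$j = v})"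
    proof (rule sum_strict_mono_ex1)
      show "finite V" unfolding V_def by simp
      show "\<forall>v\<in>V. card {k. l0$(cl k) = v} \<le> card {j. l0$j = v}" using E4 by blast
      show "\<exists>v\<in>V. card {k. l0$(cl k) = v} < card {j. l0$j = v}"
      proof (rule bexI[OF _ cV])
        show "card {k. l0$(cl k) = c} < card {j. l0$j = c}" using E4[of c] ne by linarith
      qed
    qed
    then show False using g1 g2 by simp
  qed
  obtain p where pp: "p permutes UNIV" and pl: "\<And>j. l0$(cl (p j)) = l0$j"
    using fiber_perm[of "\<lambda>j. l0$j" "\<lambda>k. l0$(cl k)", OF E5] by blast
  have A: "\<bar>nu$(p j) - l0$j\<bar> \<le> N * \<phi>" for j using cl[of "p j"] pl[of j] by simp
  define m where "m k = mu$(cl k)" for k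
  define M where "M = (\<Sum>j\<in>UNIV. \<bar>mu$j\<bar>)"
  define \<Lambda> where "\<Lambda> = (\<Sum>j\<in>UNIV. \<bar>l0$j\<bar>)"
  have muM: "\<bar>mu$j\<bar> \<le> M" for j unfolding M_def by (rule member_le_sum[where f="\<lambda>j. \<bar>mu$j\<bar>"]) auto
  have B1: "(\<Sum>j\<in>UNIV. mu$j * nu$(p j)) = (\<Sum>k\<in>UNIV. m k * nu$k)"
  proof -
    have "(\<Sum>j\<in>UNIV. mu$j * nu$(p j)) = (\<Sum>j\<in>UNIV. m (p j) * nu$(p j))"
    proof (rule sum.cong[OF refl])
      fix j show "mu$j * nu$(p j) = m (p j) * nu$(p j)" unfolding m_def using muc[OF pl[of j]] by simp
    qed
    also have "\<dots> = (\<Sum>k\<in>UNIV. m k * nu$k)"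
      using sum.permute[OF pp, of "\<lambda>k. m k * nu$k"] by (simp add: comp_def)
    finally show ?thesis .
  qed
  have B2: "(\<Sum>j\<in>UNIV. mu$j * Y$j$j) = (\<Sum>k\<in>UNIV. nu$k * (\<Sum>j\<in>UNIV. mu$j * (Q$j$k)^2))"
  proof -
    have "(\<Sum>j\<in>UNIV. mu$j * Y$j$j) = (\<Sum>j\<in>UNIV. \<Sum>k\<in>UNIV. nu$k * (mu$j * (Q$j$k)^2))"
    proof (rule sum.cong[OF refl])
      fix j
      have "mu$j * Y$j$j = mu$j * (\<Sum>k\<in>UNIV. (Q$j$k)^2 * nu$k)" by (simp only: diag_eq[OF Y])
      also have "\<dots> = (\<Sum>k\<in>UNIV. mu$j * ((Q$j$k)^2 * nu$k))" by (rule sum_distrib_left)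
      also have "\<dots> = (\<Sum>k\<in>UNIV. nu$k * (mu$j * (Q$j$k)^2))" by (simp only: mult_ac)
      finally show "mu$j * Y$j$j = (\<Sum>k\<in>UNIV. nu$k * (mu$j * (Q$j$k)^2))" .
    qed
    also have "\<dots> = (\<Sum>k\<in>UNIV. \<Sum>j\<in>UNIV. nu$k * (mu$j * (Q$j$k)^2))" by (rule sum.swap)
    also have "\<dots> = (\<Sum>k\<in>UNIV. nu$k * (\<Sum>j\<in>UNIV. mu$j * (Q$j$k)^2))" by (simp add: sum_distrib_left)
    finally show ?thesis .
  qed
  have B3: "\<bar>m k - (\<Sum>j\<in>UNIV. mu$j * (Q$j$k)^2)\<bar> \<le> N * (2 * M * \<delta>)" for k
  proof -
    have "m k - (\<Sum>j\<in>UNIV. mu$j * (Q$j$k)^2) = (\<Sum>j\<in>UNIV. (m k - mu$j) * (Q$j$k)^2)"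
      using orth_col[OF oQ, of k] by (simp add: algebra_simps sum_subtractf sum_distrib_left[symmetric])
    also have "\<bar>\<dots>\<bar> \<le> (\<Sum>j\<in>UNIV. \<bar>(m k - mu$j) * (Q$j$k)^2\<bar>)" by (rule sum_abs)
    also have "\<dots> \<le> (\<Sum>j\<in>(UNIV::'n set). 2 * M * \<delta>)"
    proof (intro sum_mono)
      fix j
      show "\<bar>(m k - mu$j) * (Q$j$k)^2\<bar> \<le> 2 * M * \<delta>"
      proof (cases "l0$j = l0$(cl k)")
        case True then have "m k = mu$j" unfolding m_def using muc by metis
        then show ?thesis using del0 muM[of j] by simp
      next
        case False
        have "\<bar>m k - mu$j\<bar> \<le> 2 * M" using muM[of j] muM[of "cl k"] unfolding m_def by linarith
        moreover have "(Q$j$k)^2 \<le> \<delta>" by (rule E3[OF False])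
        ultimately have "\<bar>m k - mu$j\<bar> * (Q$j$k)^2 \<le> 2 * M * \<delta>"
          by (intro mult_mono) auto
        then show ?thesis by (simp add: abs_mult)
      qed
    qed
    also have "\<dots> = N * (2 * M * \<delta>)" unfolding N_def by simp
    finally show ?thesis .
  qed
  have B4: "(\<Sum>k\<in>UNIV. \<bar>nu$k\<bar>) \<le> \<Lambda> + N * \<gamma>"
  proof -
    have "(\<Sum>k\<in>UNIV. \<bar>nu$k\<bar>) = (\<Sum>j\<in>UNIV. \<bar>nu$(p j)\<bar>)"
      using sum.permute[OF pp, of "\<lambda>k. \<bar>nu$k\<bar>"] by (simp add: comp_def)
    also have "\<dots> \<le> (\<Sum>j\<in>UNIV. \<bar>l0$j\<bar> + \<gamma>)"
      using A Nphi phi0 by (intro sum_mono) (smt (verit) mult_nonneg_nonneg)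
    also have "\<dots> = \<Lambda> + N * \<gamma>" unfolding \<Lambda>_def N_def by (simp add: sum.distrib)
    finally show ?thesis .
  qed
  have "\<bar>(\<Sum>j\<in>UNIV. mu$j * nu$(p j)) - (\<Sum>j\<in>UNIV. mu$j * Y$j$j)\<bar>
      = \<bar>\<Sum>k\<in>UNIV. nu$k * (m k - (\<Sum>j\<in>UNIV. mu$j * (Q$j$k)^2))\<bar>"
    unfolding B1 B2 by (simp add: sum_subtractf algebra_simps)
  also have "\<dots> \<le> (\<Sum>k\<in>UNIV. \<bar>nu$k\<bar> * (N * (2 * M * \<delta>)))"
    by (rule order_trans[OF sum_abs]) (auto intro!: sum_mono mult_left_mono B3 simp: abs_mult)
  also have "\<dots> = (\<Sum>k\<in>UNIV. \<bar>nu$k\<bar>) * (N * (2 * M * \<delta>))" by (simp add: sum_distrib_right)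
  also have "\<dots> \<le> (\<Lambda> + N * \<gamma>) * (N * (2 * M * \<delta>))"
    using B4 del0 N1 by (intro mult_right_mono) (auto simp: M_def intro!: sum_nonneg)
  also have "\<dots> = (\<Lambda> + N * \<gamma>) * N * 8 * M / \<gamma>^2 * \<phi>^2" unfolding \<delta>_def by (simp add: field_simps)
  finally show ?thesis using pp A unfolding N_def M_def \<Lambda>_def by blast
qed

lemma grad_const:
  fixes J :: "real^'n \<Rightarrow> real"
  assumes sym: "symmetric_fun J" and der: "(J has_derivative (\<lambda>h. g \<bullet> h)) (at l)"
    and eq: "l$a = l$b"
  shows "g$a = g$b"
proof -
  define s where "s = Transposition.transpose a b"
  have sp: "s permutes UNIV" unfolding s_def by (rule permutes_swap_id) auto
  define T where "T h = (\<chi> j. h $ s j)" for h :: "real^'n"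
  have lin: "linear T" unfolding T_def by (auto intro!: linearI simp: vec_eq_iff)
  then have bl: "bounded_linear T" by (simp add: linear_conv_bounded_linear)
  have Tl: "T l = l" unfolding T_def s_def using eq
    by (simp add: vec_eq_iff Transposition.transpose_def)
  have JT: "J (T h) = J h" for h using sym sp unfolding symmetric_fun_def T_def by blast
  have dT: "(T has_derivative T) (at l)" using bl by (rule bounded_linear_imp_has_derivative)
  have "((\<lambda>h. J (T h)) has_derivative (\<lambda>h. g \<bullet> T h)) (at l)"
    using has_derivative_compose[OF dT, of J "\<lambda>h. g \<bullet> h"] der Tl by simp
  then have "(J has_derivative (\<lambda>h. g \<bullet> T h)) (at l)" using JT by simp
  then have "(\<lambda>h. g \<bullet> T h) = (\<lambda>h. g \<bullet> h)" using der by (rule has_derivative_unique)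
  then have "g \<bullet> T (axis a 1) = g \<bullet> axis a 1" by metis
  moreover have "T (axis a 1) = axis b 1" unfolding T_def s_def
    by (auto simp: vec_eq_iff axis_def Transposition.transpose_def)
  ultimately show ?thesis by (simp add: inner_axis)
qed

lemma lip_of_deriv:
  fixes h :: "'a::real_normed_vector \<Rightarrow> real"
  assumes "(h has_derivative h') (at x)" "h x = 0"
  shows "\<exists>K d. K \<ge> 0 \<and> d > 0 \<and> (\<forall>y. norm (y - x) < d \<longrightarrow> \<bar>h y\<bar> \<le> K * norm (y - x))"
proof -
  have bl: "bounded_linear h'" and lim: "\<forall>e>0. \<exists>d>0. \<forall>y. norm (y - x) < d \<longrightarrow> norm (h y - h x - h' (y - x)) \<le> e * norm (y - x)"
    using assms(1) unfolding has_derivative_at_alt by auto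
  obtain B where B: "B > 0" "\<And>v. norm (h' v) \<le> norm v * B" using bounded_linear.pos_bounded[OF bl] by blast
  obtain d where d: "d > 0" "\<And>y. norm (y - x) < d \<Longrightarrow> norm (h y - h x - h' (y - x)) \<le> 1 * norm (y - x)"
    using lim by (meson zero_less_one)
  show ?thesis
  proof (intro exI conjI allI impI)
    show "B + 1 \<ge> 0" using B by simp
    show "d > 0" by (rule d)
    fix y assume y: "norm (y - x) < d"
    have "h y = (h y - h x - h' (y - x)) + h' (y - x)" using assms(2) by simp
    then have "\<bar>h y\<bar> \<le> \<bar>h y - h x - h' (y - x)\<bar> + \<bar>h' (y - x)\<bar>" by (metis abs_triangle_ineq)
    then have "\<bar>h y\<bar> \<le> norm (h y - h x - h' (y - x)) + norm (h' (y - x))" by simp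
    also have "\<dots> \<le> 1 * norm (y - x) + norm (y - x) * B" using d(2)[OF y] B(2)[of "y - x"] by simp
    finally show "\<bar>h y\<bar> \<le> (B + 1) * norm (y - x)" by (simp add: algebra_simps)
  qed
qed

lemma lip_sum:
  fixes h :: "'k \<Rightarrow> 'a::real_normed_vector \<Rightarrow> real"
  assumes "finite S"
    and "\<And>k. k \<in> S \<Longrightarrow> \<exists>K d. K \<ge> 0 \<and> d > 0 \<and> (\<forall>y. norm (y - x) < d \<longrightarrow> \<bar>h k y\<bar> \<le> K * norm (y - x))"
  shows "\<exists>K d. K \<ge> 0 \<and> d > 0 \<and> (\<forall>y. norm (y - x) < d \<longrightarrow> (\<Sum>k\<in>S. \<bar>h k y\<bar>) \<le> K * norm (y - x))"
  using assms
proof (induction S rule: finite_induct)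
  case empty then show ?case by (intro exI[of _ 0] exI[of _ 1]) auto
next
  case (insert a F)
  obtain K1 d1 where 1: "K1 \<ge> 0" "d1 > 0" "\<forall>y. norm (y - x) < d1 \<longrightarrow> \<bar>h a y\<bar> \<le> K1 * norm (y - x)"
    using insert.prems by blast
  obtain K2 d2 where 2: "K2 \<ge> 0" "d2 > 0" "\<forall>y. norm (y - x) < d2 \<longrightarrow> (\<Sum>k\<in>F. \<bar>h k y\<bar>) \<le> K2 * norm (y - x)"
    using insert.IH insert.prems by blast
  show ?case
  proof (intro exI conjI allI impI)
    show "K1 + K2 \<ge> 0" using 1 2 by simp
    show "min d1 d2 > 0" using 1 2 by simp
    fix y assume "norm (y - x) < min d1 d2"
    then have "\<bar>h a y\<bar> \<le> K1 * norm (y - x)" "(\<Sum>k\<in>F. \<bar>h k y\<bar>) \<le> K2 * norm (y - x)"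
      using 1(3) 2(3) by auto
    then have "\<bar>h a y\<bar> + (\<Sum>k\<in>F. \<bar>h k y\<bar>) \<le> (K1 + K2) * norm (y - x)"
      by (simp add: distrib_right)
    then show "(\<Sum>k\<in>insert a F. \<bar>h k y\<bar>) \<le> (K1 + K2) * norm (y - x)"
      using insert.hyps by simp
  qed
qed

lemma conj_ent:
  fixes U Z :: "real^'n^'n"
  shows "(transpose U ** Z ** U) $ j $ l = (\<Sum>a\<in>UNIV. \<Sum>b\<in>UNIV. U$a$j * Z$a$b * U$b$l)"
proof -
  have "(transpose U ** Z ** U) $ j $ l = (\<Sum>b\<in>UNIV. (\<Sum>a\<in>UNIV. U$a$j * Z$a$b) * U$b$l)"
    by (simp add: matrix_matrix_mult_def transpose_def)
  also have "\<dots> = (\<Sum>b\<in>UNIV. \<Sum>a\<in>UNIV. U$a$j * Z$a$b * U$b$l)"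
    by (simp add: sum_distrib_right)
  also have "\<dots> = (\<Sum>a\<in>UNIV. \<Sum>b\<in>UNIV. U$a$j * Z$a$b * U$b$l)"
    by (rule sum.swap)
  finally show ?thesis .
qed

lemma M_ent:
  fixes U :: "real^'n^'n"
  shows "(U ** diag_mat mu ** transpose U) $ a $ b = (\<Sum>j\<in>UNIV. U$a$j * mu$j * U$b$j)"
  unfolding matrix_matrix_mult_def diag_mat_def transpose_def
  by (simp add: if_distrib[of "\<lambda>x. _ * x"] sum.delta' cong: if_cong)

lemma trace_ident:
  fixes U Z :: "real^'n^'n"
  shows "(\<Sum>j\<in>UNIV. mu$j * (transpose U ** Z ** U) $ j $ j) =
    (\<Sum>a\<in>UNIV. \<Sum>b\<in>UNIV. (U ** diag_mat mu ** transpose U) $ a $ b * Z$a$b)"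
proof -
  have "(\<Sum>j\<in>UNIV. mu$j * (transpose U ** Z ** U) $ j $ j) =
      (\<Sum>j\<in>UNIV. \<Sum>a\<in>UNIV. \<Sum>b\<in>UNIV. U$a$j * mu$j * U$b$j * Z$a$b)"
    unfolding conj_ent by (simp add: sum_distrib_left mult_ac)
  also have "\<dots> = (\<Sum>a\<in>UNIV. \<Sum>j\<in>UNIV. \<Sum>b\<in>UNIV. U$a$j * mu$j * U$b$j * Z$a$b)"
    by (rule sum.swap)
  also have "\<dots> = (\<Sum>a\<in>UNIV. \<Sum>b\<in>UNIV. \<Sum>j\<in>UNIV. U$a$j * mu$j * U$b$j * Z$a$b)"
    by (rule sum.cong[OF refl], rule sum.swap)
  also have "\<dots> = (\<Sum>a\<in>UNIV. \<Sum>b\<in>UNIV. (U ** diag_mat mu ** transpose U) $ a $ b * Z$a$b)"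
    unfolding M_ent by (simp add: sum_distrib_right)
  finally show ?thesis .
qed

lemma Wmat_sym: "transpose (Wmat f z) = Wmat f z"
  unfolding Wmat_def transpose_def by (simp add: vec_eq_iff norm_minus_commute)

lemma ee_deriv:
  fixes x :: "real^'d^'n" and f :: "real \<Rightarrow> real"
  assumes ne: "k \<noteq> i" and fd: "f differentiable (at ((norm (x$i - x$k))^2))"
  shows "((\<lambda>y. f ((norm (y - x$k))^2) - f ((norm (x$i - x$k))^2)) has_derivative
     (\<lambda>h. deriv f ((norm (x$i - x$k))^2) * (2 * ((x$i - x$k) \<bullet> h)))) (at (x$i))"
proof -
  have d1: "((\<lambda>y. (norm (y - x$k))^2) has_derivative (\<lambda>h. 2 * ((x$i - x$k) \<bullet> h))) (at (x$i))"
  proof -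
    have "((\<lambda>y. (y - x$k) \<bullet> (y - x$k)) has_derivative
        (\<lambda>h. (x$i - x$k) \<bullet> h + h \<bullet> (x$i - x$k))) (at (x$i))"
      by (auto intro!: derivative_eq_intros)
    then show ?thesis by (simp add: power2_norm_eq_inner inner_commute)
  qed
  have d2: "(f has_derivative (\<lambda>t. deriv f ((norm (x$i - x$k))^2) * t)) (at ((norm (x$i - x$k))^2))"
    using fd DERIV_deriv_iff_real_differentiable has_field_derivative_imp_has_derivative by blast
  have "((\<lambda>y. f ((norm (y - x$k))^2)) has_derivative
     (\<lambda>h. deriv f ((norm (x$i - x$k))^2) * (2 * ((x$i - x$k) \<bullet> h)))) (at (x$i))"
    using has_derivative_compose[OF d1, of f] d2 by simp
  then show ?thesis by (auto intro!: derivative_eq_intros)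
qed

theorem propositionA1:
  fixes x :: "real ^ ('d :: finite) ^ ('n :: {finite, linorder})"
    and f :: "real \<Rightarrow> real"
    and J :: "real ^ ('n :: {finite, linorder}) \<Rightarrow> real"
    and gJ :: "real ^ ('n :: {finite, linorder})"
    and U :: "real ^ ('n :: {finite, linorder}) ^ ('n :: {finite, linorder})"
    and i :: 'n
  assumes distinct: "\<And>j k. j \<noteq> k \<Longrightarrow> x $ j \<noteq> x $ k"
    and f_diff: "\<And>t. t > 0 \<Longrightarrow> f differentiable (at t)"
    and J_sym: "symmetric_fun J"
    and J_grad: "(J has_derivative (\<lambda>h. gJ \<bullet> h)) (at (eigvals (Wmat f x)))"
    and U_orth: "orthogonal_matrix U"
    and U_dec: "Wmat f x = U ** diag_mat (eigvals (Wmat f x)) ** transpose U"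
  shows "((\<lambda>y. J (eigvals (Wmat f (\<chi> j. if j = i then y else x $ j))))
           has_derivative
          (\<lambda>h. (4 *\<^sub>R (\<Sum>k\<in>UNIV - {i}.
                 ((U ** diag_mat gJ ** transpose U) $ i $ k * deriv f ((norm (x $ i - x $ k))\<^sup>2))
                   *\<^sub>R (x $ i - x $ k))) \<bullet> h)) (at (x $ i))"
proof -
  define N where "N = real CARD('n)"
  have N1: "N \<ge> 1" unfolding N_def by (simp add: Suc_leI)
  define l0 where "l0 = eigvals (Wmat f x)"
  define xs where "xs y = (\<chi> j. if j = i then y else x $ j)" for y
  define g where "g y = J (eigvals (Wmat f (xs y)))" for y
  define M where "M = U ** diag_mat gJ ** transpose U"
  define ee where "ee k y = (if k = i then 0 else f ((norm (y - x$k))^2) - f ((norm (x$i - x$k))^2))" for k y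
  define c where "c k = (if k = i then 0 else deriv f ((norm (x$i - x$k))^2))" for k
  define L where "L = (\<lambda>h. (4 *\<^sub>R (\<Sum>k\<in>UNIV - {i}. (M $ i $ k * deriv f ((norm (x $ i - x $ k))\<^sup>2)) *\<^sub>R (x $ i - x $ k))) \<bullet> h)"
  define G where "G y = J l0 + 2 * (\<Sum>k\<in>UNIV. M$i$k * ee k y)" for y
  have ee0: "ee k (x$i) = 0" for k by (simp add: ee_def)
  have xs0: "xs (x$i) = x" by (simp add: xs_def vec_eq_iff)
  have g0: "g (x$i) = J l0" by (simp add: g_def xs0 l0_def)
  have G0: "G (x$i) = J l0" by (simp add: G_def ee0)
  have dee: "(ee k has_derivative (\<lambda>h. c k * (2 * ((x$i - x$k) \<bullet> h)))) (at (x$i))" for k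
  proof (cases "k = i")
    case True
    then have "ee k = (\<lambda>y. 0)" by (simp add: ee_def fun_eq_iff)
    then show ?thesis using True by (simp add: c_def)
  next
    case False
    have "x$i \<noteq> x$k" using distinct False by metis
    then have "(norm (x$i - x$k))^2 > 0" by simp
    then have fd: "f differentiable (at ((norm (x$i - x$k))^2))" by (rule f_diff)
    have "ee k = (\<lambda>y. f ((norm (y - x$k))^2) - f ((norm (x$i - x$k))^2))"
      using False by (simp add: ee_def fun_eq_iff)
    then show ?thesis using ee_deriv[OF False fd] False by (simp add: c_def)
  qed
  have dG: "(G has_derivative L) (at (x$i))"
  proof -
    have d: "(G has_derivative (\<lambda>h. 0 + 2 * (\<Sum>k\<in>UNIV. M$i$k * (c k * (2 * ((x$i - x$k) \<bullet> h)))))) (at (x$i))"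
      unfolding G_def
      by (intro has_derivative_add has_derivative_const has_derivative_mult_right has_derivative_sum dee)
    have "L h = 0 + 2 * (\<Sum>k\<in>UNIV. M$i$k * (c k * (2 * ((x$i - x$k) \<bullet> h))))" for h
    proof -
      have "(\<Sum>k\<in>UNIV. M$i$k * (c k * (2 * ((x$i - x$k) \<bullet> h)))) =
          M$i$i * (c i * (2 * ((x$i - x$i) \<bullet> h))) + (\<Sum>k\<in>UNIV - {i}. M$i$k * (c k * (2 * ((x$i - x$k) \<bullet> h))))"
        by (subst sum.remove[of UNIV i]) auto
      also have "\<dots> = (\<Sum>k\<in>UNIV - {i}. 2 * ((M $ i $ k * deriv f ((norm (x $ i - x $ k))\<^sup>2)) * ((x$i - x$k) \<bullet> h)))"
        by (auto simp: c_def intro!: sum.cong)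
      finally show ?thesis unfolding L_def
        by (simp add: inner_sum_left sum_distrib_left[symmetric])
    qed
    then have "L = (\<lambda>h. 0 + 2 * (\<Sum>k\<in>UNIV. M$i$k * (c k * (2 * ((x$i - x$k) \<bullet> h)))))" by (simp add: fun_eq_iff)
    then show ?thesis using d by simp
  qed
  have "\<exists>K d. K \<ge> 0 \<and> d > 0 \<and> (\<forall>y. norm (y - x$i) < d \<longrightarrow> (\<Sum>k\<in>UNIV. \<bar>ee k y\<bar>) \<le> K * norm (y - x$i))"
  proof (rule lip_sum)
    show "finite (UNIV :: 'n set)" by simp
    fix k :: 'n
    show "\<exists>K d. K \<ge> 0 \<and> d > 0 \<and> (\<forall>y. norm (y - x$i) < d \<longrightarrow> \<bar>ee k y\<bar> \<le> K * norm (y - x$i))"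
      by (rule lip_of_deriv[OF dee ee0])
  qed
  then obtain K d1 where K: "K \<ge> 0" "d1 > 0" "\<And>y. norm (y - x$i) < d1 \<Longrightarrow> (\<Sum>k\<in>UNIV. \<bar>ee k y\<bar>) \<le> K * norm (y - x$i)"
    by blast
  have muc: "gJ$j = gJ$k" if "l0$j = l0$k" for j k
    using grad_const[OF J_sym J_grad[folded l0_def] that] .
  define \<gamma> where "\<gamma> = Min (insert 1 {\<bar>l0$j - l0$k\<bar> | j k. l0$j \<noteq> l0$k})"
  have finD: "finite {\<bar>l0$j - l0$k\<bar> | j k. l0$j \<noteq> l0$k}"
  proof -
    have "{\<bar>l0$j - l0$k\<bar> | j k. l0$j \<noteq> l0$k} \<subseteq> (\<lambda>(j,k). \<bar>l0$j - l0$k\<bar>) ` UNIV" by auto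
    then show ?thesis by (rule finite_subset) simp
  qed
  have gpos: "\<gamma> > 0"
    unfolding \<gamma>_def using finD by (auto simp: Min_gr_iff)
  have gap: "\<gamma> \<le> \<bar>l0$j - l0$k\<bar>" if "l0$j \<noteq> l0$k" for j k
    unfolding \<gamma>_def using finD that by (intro Min_le) auto
  define Y where "Y y = transpose U ** Wmat f (xs y) ** U" for y
  define \<phi> where "\<phi> y = (\<Sum>j\<in>UNIV. \<Sum>l\<in>UNIV. \<bar>Y y $j$l - (if j = l then l0$j else 0)\<bar>)" for y
  have UU: "transpose U ** U = mat 1" "U ** transpose U = mat 1" using U_orth unfolding orthogonal_matrix_def by auto
  have Y0: "transpose U ** Wmat f x ** U = diag_mat l0"
  proof -
    have "transpose U ** Wmat f x ** U = (transpose U ** U) ** diag_mat l0 ** (transpose U ** U)"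
      by (subst U_dec) (simp add: l0_def matrix_mul_assoc)
    then show ?thesis using UU by simp
  qed
  have Eent: "Wmat f (xs y) $a$b - Wmat f x $a$b = (if a = i then ee b y else 0) + (if b = i then ee a y else 0)" for a b y
    unfolding Wmat_def xs_def ee_def by (auto simp: norm_minus_commute)
  have Ydiff: "Y y $j$l - (if j = l then l0$j else 0) =
      (\<Sum>a\<in>UNIV. \<Sum>b\<in>UNIV. U$a$j * (Wmat f (xs y) $a$b - Wmat f x $a$b) * U$b$l)" for y j l
  proof -
    have "(if j = l then l0$j else 0) = (transpose U ** Wmat f x ** U) $ j $ l"
      unfolding Y0 by (simp add: diag_mat_def)
    then show ?thesis unfolding Y_def conj_ent
      by (simp add: sum_subtractf[symmetric] algebra_simps)
  qed
  have phiB: "\<phi> y \<le> N * N * (2 * (\<Sum>k\<in>UNIV. \<bar>ee k y\<bar>))" for y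
  proof -
    define E where "E a b = Wmat f (xs y) $a$b - Wmat f x $a$b" for a b
    have Eb: "(\<Sum>a\<in>UNIV. \<Sum>b\<in>UNIV. \<bar>E a b\<bar>) \<le> 2 * (\<Sum>k\<in>UNIV. \<bar>ee k y\<bar>)"
    proof -
      have "(\<Sum>a\<in>UNIV. \<Sum>b\<in>UNIV. \<bar>E a b\<bar>) \<le>
          (\<Sum>a\<in>UNIV. \<Sum>b\<in>UNIV. (if a = i then \<bar>ee b y\<bar> else 0) + (if b = i then \<bar>ee a y\<bar> else 0))"
        unfolding E_def Eent by (intro sum_mono) auto
      also have "\<dots> = (\<Sum>a\<in>UNIV. \<Sum>b\<in>UNIV. (if a = i then \<bar>ee b y\<bar> else 0)) +
          (\<Sum>a\<in>UNIV. \<Sum>b\<in>UNIV. (if b = i then \<bar>ee a y\<bar> else 0))"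
        by (simp add: sum.distrib)
      also have "\<dots> = 2 * (\<Sum>k\<in>UNIV. \<bar>ee k y\<bar>)"
      proof -
        have s1: "(\<Sum>a\<in>UNIV. \<Sum>b\<in>UNIV. (if a = i then \<bar>ee b y\<bar> else 0)) =
            (\<Sum>a\<in>UNIV. if a = i then (\<Sum>b\<in>UNIV. \<bar>ee b y\<bar>) else 0)"
          by (intro sum.cong) auto
        have s2: "(\<Sum>a\<in>UNIV. \<Sum>b\<in>UNIV. (if b = i then \<bar>ee a y\<bar> else 0)) = (\<Sum>a\<in>UNIV. \<bar>ee a y\<bar>)"
          by (simp add: sum.delta sum.delta')
        show ?thesis unfolding s1 s2 by (simp add: sum.delta sum.delta')
      qed
      finally show ?thesis .
    qed
    have ent: "\<bar>Y y $j$l - (if j = l then l0$j else 0)\<bar> \<le> 2 * (\<Sum>k\<in>UNIV. \<bar>ee k y\<bar>)" for j l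
    proof -
      have "\<bar>Y y $j$l - (if j = l then l0$j else 0)\<bar> = \<bar>\<Sum>a\<in>UNIV. \<Sum>b\<in>UNIV. U$a$j * E a b * U$b$l\<bar>"
        unfolding Ydiff E_def ..
      also have "\<dots> \<le> (\<Sum>a\<in>UNIV. \<bar>\<Sum>b\<in>UNIV. U$a$j * E a b * U$b$l\<bar>)" by (rule sum_abs)
      also have "\<dots> \<le> (\<Sum>a\<in>UNIV. \<Sum>b\<in>UNIV. \<bar>E a b\<bar>)"
      proof (intro sum_mono)
        fix a
        have "\<bar>\<Sum>b\<in>UNIV. U$a$j * E a b * U$b$l\<bar> \<le> (\<Sum>b\<in>UNIV. \<bar>U$a$j * E a b * U$b$l\<bar>)" by (rule sum_abs)
        also have "\<dots> \<le> (\<Sum>b\<in>UNIV. \<bar>E a b\<bar>)"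
        proof (intro sum_mono)
          fix b
          have "\<bar>U$a$j\<bar> * \<bar>U$b$l\<bar> \<le> 1 * 1" using orth_le1[OF U_orth] by (intro mult_mono) auto
          then have "\<bar>U$a$j\<bar> * \<bar>U$b$l\<bar> * \<bar>E a b\<bar> \<le> \<bar>E a b\<bar>" by (simp add: mult_left_le_one_le mult_le_one)
          then show "\<bar>U$a$j * E a b * U$b$l\<bar> \<le> \<bar>E a b\<bar>" by (simp add: abs_mult mult_ac)
        qed
        finally show "\<bar>\<Sum>b\<in>UNIV. U$a$j * E a b * U$b$l\<bar> \<le> (\<Sum>b\<in>UNIV. \<bar>E a b\<bar>)" .
      qed
      finally show ?thesis using Eb by linarith
    qed
    have "\<phi> y \<le> (\<Sum>j\<in>(UNIV::'n set). \<Sum>l\<in>(UNIV::'n set). 2 * (\<Sum>k\<in>UNIV. \<bar>ee k y\<bar>))"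
      unfolding \<phi>_def by (intro sum_mono ent)
    also have "\<dots> = N * N * (2 * (\<Sum>k\<in>UNIV. \<bar>ee k y\<bar>))" unfolding N_def by simp
    finally show ?thesis .
  qed
  have trace: "(\<Sum>j\<in>UNIV. gJ$j * Y y $j$j) - (\<Sum>j\<in>UNIV. gJ$j * l0$j) = 2 * (\<Sum>k\<in>UNIV. M$i$k * ee k y)" for y
  proof -
    have t0: "(\<Sum>j\<in>UNIV. gJ$j * l0$j) = (\<Sum>j\<in>UNIV. gJ$j * (transpose U ** Wmat f x ** U) $ j $ j)"
      unfolding Y0 by (simp add: diag_mat_def)
    have Msym: "M$a$b = M$b$a" for a b unfolding M_def M_ent by (simp add: mult_ac)
    have "(\<Sum>j\<in>UNIV. gJ$j * Y y $j$j) - (\<Sum>j\<in>UNIV. gJ$j * l0$j) =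
        (\<Sum>a\<in>UNIV. \<Sum>b\<in>UNIV. M$a$b * (Wmat f (xs y) $a$b - Wmat f x $a$b))"
      unfolding t0 Y_def trace_ident M_def by (simp add: sum_subtractf[symmetric] right_diff_distrib)
    also have "\<dots> = (\<Sum>a\<in>UNIV. \<Sum>b\<in>UNIV. (if a = i then M$i$b * ee b y else 0) + (if b = i then M$a$i * ee a y else 0))"
      unfolding Eent by (intro sum.cong refl) (auto simp: distrib_left)
    also have "\<dots> = (\<Sum>a\<in>UNIV. \<Sum>b\<in>UNIV. (if a = i then M$i$b * ee b y else 0)) +
        (\<Sum>a\<in>UNIV. \<Sum>b\<in>UNIV. (if b = i then M$a$i * ee a y else 0))"
      by (simp only: sum.distrib)
    also have "\<dots> = (\<Sum>b\<in>UNIV. M$i$b * ee b y) + (\<Sum>a\<in>UNIV. M$a$i * ee a y)"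
    proof -
      have s1: "(\<Sum>a\<in>UNIV. \<Sum>b\<in>UNIV. (if a = i then M$i$b * ee b y else 0)) =
          (\<Sum>a\<in>UNIV. if a = i then (\<Sum>b\<in>UNIV. M$i$b * ee b y) else 0)"
        by (intro sum.cong) auto
      have s2: "(\<Sum>a\<in>UNIV. \<Sum>b\<in>UNIV. (if b = i then M$a$i * ee a y else 0)) = (\<Sum>a\<in>UNIV. M$a$i * ee a y)"
        by (simp add: sum.delta sum.delta')
      show ?thesis unfolding s1 s2 by (simp add: sum.delta sum.delta')
    qed
    also have "\<dots> = 2 * (\<Sum>k\<in>UNIV. M$i$k * ee k y)" using Msym by simp
    finally show ?thesis .
  qed
  have Wy: "Wmat f (xs y) = (U ** Q) ** diag_mat \<nu> ** transpose (U ** Q)"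
    if "Y y = Q ** diag_mat \<nu> ** transpose Q" for y Q \<nu>
  proof -
    have "Wmat f (xs y) = (U ** transpose U) ** Wmat f (xs y) ** (U ** transpose U)" using UU by simp
    also have "\<dots> = U ** Y y ** transpose U" unfolding Y_def by (simp add: matrix_mul_assoc)
    also have "\<dots> = (U ** Q) ** diag_mat \<nu> ** transpose (U ** Q)"
      unfolding that by (simp add: matrix_transpose_mul matrix_mul_assoc)
    finally show ?thesis .
  qed
  have Ysym: "transpose (Y y) = Y y" for y
    unfolding Y_def by (simp add: matrix_transpose_mul Wmat_sym matrix_mul_assoc)
  define C where "C = ((\<Sum>j\<in>UNIV. \<bar>l0$j\<bar>) + N * \<gamma>) * N * 8 * (\<Sum>j\<in>UNIV. \<bar>gJ$j\<bar>) / \<gamma>^2"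
  have C0: "C \<ge> 0" unfolding C_def using N1 gpos by (intro divide_nonneg_pos mult_nonneg_nonneg add_nonneg_nonneg sum_nonneg) auto
  define K' where "K' = N * N * (2 * K)"
  have K'0: "K' \<ge> 0" unfolding K'_def using N1 K(1) by simp
  have D1: "N * N * K' + 1 > 0" using mult_nonneg_nonneg[OF mult_nonneg_nonneg[of N N] K'0] N1 by linarith
  have D2: "2 * N * K' + 1 > 0" using mult_nonneg_nonneg[of "2 * N" K'] N1 K'0 by linarith
  have D3': "C * K'^2 + 1 > 0" using mult_nonneg_nonneg[OF C0 zero_le_power2[of K']] by linarith
  then have D3: "4 * (C * K'^2 + 1) > 0" by simp
  have phiK: "\<phi> y \<le> K' * norm (y - x$i)" if "norm (y - x$i) < d1" for y
  proof -
    have "\<phi> y \<le> N * N * (2 * (\<Sum>k\<in>UNIV. \<bar>ee k y\<bar>))" by (rule phiB)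
    also have "\<dots> \<le> N * N * (2 * (K * norm (y - x$i)))"
      using K(3)[OF that] N1 by (intro mult_left_mono) auto
    finally show ?thesis unfolding K'_def by (simp add: mult_ac)
  qed
  have phi0: "\<phi> y \<ge> 0" for y unfolding \<phi>_def by (intro sum_nonneg) auto
  have key: "\<bar>g y - G y\<bar> \<le> e / 2 * norm (y - x$i)"
    if e: "e > 0" and dJ: "\<delta> > 0" "\<forall>l. norm (l - l0) < \<delta> \<longrightarrow> norm (J l - J l0 - gJ \<bullet> (l - l0)) \<le> e / (4 * (N * N * K' + 1)) * norm (l - l0)"
      and y1: "norm (y - x$i) < d1" and y3: "norm (y - x$i) < \<gamma> / (2 * N * K' + 1)"
      and y4: "norm (y - x$i) < \<delta> / (N * N * K' + 1)"
      and y5: "norm (y - x$i) < e / (4 * (C * K'^2 + 1))" for e \<delta> y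
  proof -
    define r where "r = norm (y - x$i)"
    have r0: "r \<ge> 0" unfolding r_def by simp
    have pK: "\<phi> y \<le> K' * r" unfolding r_def by (rule phiK[OF y1])
    have small: "2 * real CARD('n) * \<phi> y < \<gamma>"
    proof -
      have "2 * N * \<phi> y \<le> 2 * N * (K' * r)" using pK N1 by (intro mult_left_mono) auto
      also have "\<dots> \<le> (2 * N * K' + 1) * r" using r0 by (simp add: algebra_simps)
      also have "\<dots> < \<gamma>"
      proof -
        have "2 * N * K' + 1 > 0" using mult_nonneg_nonneg[of "2 * N" K'] N1 K'0 by linarith
        then show ?thesis using y3 unfolding r_def by (simp add: pos_less_divide_eq mult.commute)
      qed
      finally show ?thesis unfolding N_def .
    qed
    have phiy: "\<phi> y = (\<Sum>j\<in>UNIV. \<Sum>l\<in>UNIV. \<bar>Y y $j$l - (if j = l then l0$j else 0)\<bar>)"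
      by (simp add: \<phi>_def)
    obtain Q \<nu> where Q: "orthogonal_matrix Q" "Y y = Q ** diag_mat \<nu> ** transpose Q"
      using spectral[OF Ysym] by blast
    obtain p' where p': "p' permutes UNIV" "eigvals (Wmat f (xs y)) = (\<chi> j. \<nu> $ p' j)"
      using eigvals_diag[OF orthogonal_matrix_mul[OF U_orth Q(1)] Wy[OF Q(2)]] by blast
    have gy: "g y = J \<nu>" unfolding g_def p'(2) using J_sym p'(1) unfolding symmetric_fun_def by blast
    obtain p where pp: "p permutes UNIV" and pA: "\<forall>j. \<bar>\<nu>$(p j) - l0$j\<bar> \<le> real CARD('n) * \<phi> y"
      and pB: "\<bar>(\<Sum>j\<in>UNIV. gJ$j * \<nu>$(p j)) - (\<Sum>j\<in>UNIV. gJ$j * Y y$j$j)\<bar>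
         \<le> ((\<Sum>j\<in>UNIV. \<bar>l0$j\<bar>) + real CARD('n) * \<gamma>) * real CARD('n) * 8 * (\<Sum>j\<in>UNIV. \<bar>gJ$j\<bar>) / \<gamma>^2 * (\<phi> y)^2"
      using perturb[OF Q(1) Q(2) gpos gap phiy small muc] by blast
    define l where "l = (\<chi> j. \<nu> $ p j)"
    have Jl: "J l = g y" unfolding l_def gy using J_sym pp unfolding symmetric_fun_def by blast
    have nl: "norm (l - l0) \<le> N * N * \<phi> y"
    proof -
      have "norm (l - l0) \<le> (\<Sum>j\<in>UNIV. \<bar>(l - l0) $ j\<bar>)" by (rule norm_le_l1_cart)
      also have "\<dots> \<le> (\<Sum>j\<in>(UNIV::'n set). N * \<phi> y)" unfolding l_def using pA unfolding N_def
        by (intro sum_mono) simp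
      also have "\<dots> = N * N * \<phi> y" unfolding N_def by simp
      finally show ?thesis .
    qed
    have nlr: "N * N * \<phi> y \<le> N * N * K' * r" using pK N1 by (simp add: mult_left_mono mult.assoc)
    have "norm (l - l0) < \<delta>"
    proof -
      have "N * N * K' * r \<le> (N * N * K' + 1) * r" using r0 by (simp add: algebra_simps)
      also have "\<dots> < \<delta>"
      proof -
        have "N * N * K' + 1 > 0" using mult_nonneg_nonneg[OF mult_nonneg_nonneg[of N N] K'0] N1 by linarith
        then show ?thesis using y4 unfolding r_def by (simp add: pos_less_divide_eq mult.commute)
      qed
      finally show ?thesis using nl nlr by linarith
    qed
    then have Jb: "\<bar>J l - J l0 - gJ \<bullet> (l - l0)\<bar> \<le> e / (4 * (N * N * K' + 1)) * norm (l - l0)"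
      using dJ(2) by simp
    also have "\<dots> \<le> e / (4 * (N * N * K' + 1)) * ((N * N * K' + 1) * r)"
    proof (intro mult_left_mono)
      show "norm (l - l0) \<le> (N * N * K' + 1) * r" using nl nlr r0 by (simp add: algebra_simps)
      show "0 \<le> e / (4 * (N * N * K' + 1))" using e N1 K'0 by simp
    qed
    also have "\<dots> = e / 4 * r"
    proof -
      have "N * N * K' + 1 > 0" using mult_nonneg_nonneg[OF mult_nonneg_nonneg[of N N] K'0] N1 by linarith
      then show ?thesis by (simp add: field_simps)
    qed
    finally have Jb': "\<bar>J l - J l0 - gJ \<bullet> (l - l0)\<bar> \<le> e / 4 * r" .
    have pB': "\<bar>(\<Sum>j\<in>UNIV. gJ$j * \<nu>$(p j)) - (\<Sum>j\<in>UNIV. gJ$j * Y y$j$j)\<bar> \<le> e / 4 * r"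
    proof -
      have "C * (\<phi> y)^2 \<le> C * (K' * r)^2" using pK phi0 C0 by (intro mult_left_mono power_mono) auto
      also have "\<dots> = (C * K'^2 * r) * r" by (simp add: power2_eq_square)
      also have "\<dots> \<le> e / 4 * r"
      proof (intro mult_right_mono r0)
        have "C * K'^2 * r \<le> (C * K'^2 + 1) * r" using r0 by (simp add: algebra_simps)
        also have "\<dots> \<le> e / 4"
        proof -
          have "C * K'^2 + 1 > 0" using mult_nonneg_nonneg[OF C0 zero_le_power2[of K']] by linarith
          then have "4 * (C * K'^2 + 1) > 0" by simp
          then have "r * (4 * (C * K'^2 + 1)) < e" using y5 unfolding r_def by (simp add: pos_less_divide_eq)
          then show ?thesis by (simp add: algebra_simps)
        qed
        finally show "C * K'^2 * r \<le> e / 4" .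
      qed
      finally show ?thesis using pB unfolding C_def N_def by linarith
    qed
    have inn: "gJ \<bullet> (l - l0) = (\<Sum>j\<in>UNIV. gJ$j * \<nu>$(p j)) - (\<Sum>j\<in>UNIV. gJ$j * l0$j)"
      unfolding l_def by (simp add: inner_vec_def sum_subtractf algebra_simps)
    have "g y - G y = (J l - J l0 - gJ \<bullet> (l - l0)) + ((\<Sum>j\<in>UNIV. gJ$j * \<nu>$(p j)) - (\<Sum>j\<in>UNIV. gJ$j * Y y$j$j))"
      unfolding inn G_def Jl[symmetric] using trace[of y] by simp
    then have "\<bar>g y - G y\<bar> \<le> e / 4 * r + e / 4 * r" using Jb' pB' by linarith
    then show ?thesis unfolding r_def by simp
  qed
  have "(g has_derivative L) (at (x$i))"
    unfolding has_derivative_at_alt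
  proof (intro conjI allI impI)
    show "bounded_linear L" unfolding L_def by (rule bounded_linear_inner_right)
    fix e :: real assume e: "e > 0"
    obtain dG where dG0: "dG > 0" and dGp: "\<And>y. norm (y - x$i) < dG \<Longrightarrow> norm (G y - G (x$i) - L (y - x$i)) \<le> e / 2 * norm (y - x$i)"
      using dG e unfolding has_derivative_at_alt by (meson half_gt_zero)
    have eJ: "e / (4 * (N * N * K' + 1)) > 0" using e D1 by simp
    obtain \<delta> where dJ: "\<delta> > 0" "\<forall>l. norm (l - l0) < \<delta> \<longrightarrow> norm (J l - J l0 - gJ \<bullet> (l - l0)) \<le> e / (4 * (N * N * K' + 1)) * norm (l - l0)"
      using J_grad[folded l0_def] eJ unfolding has_derivative_at_alt by blast
    define d where "d = min d1 (min dG (min (\<gamma> / (2 * N * K' + 1)) (min (\<delta> / (N * N * K' + 1)) (e / (4 * (C * K'^2 + 1))))))"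
    have d0: "d > 0" unfolding d_def using K(2) dG0 gpos dJ(1) e D1 D2 D3 by simp
    show "\<exists>d>0. \<forall>y. norm (y - x$i) < d \<longrightarrow> norm (g y - g (x$i) - L (y - x$i)) \<le> e * norm (y - x$i)"
    proof (intro exI conjI allI impI d0)
      fix y assume y: "norm (y - x$i) < d"
      have k: "\<bar>g y - G y\<bar> \<le> e / 2 * norm (y - x$i)"
        by (rule key[OF e dJ]) (use y in \<open>auto simp: d_def\<close>)
      have "norm (G y - G (x$i) - L (y - x$i)) \<le> e / 2 * norm (y - x$i)" using y by (intro dGp) (simp add: d_def)
      moreover have "\<bar>g y - g (x$i) - L (y - x$i)\<bar> \<le> \<bar>g y - G y\<bar> + \<bar>G y - G (x$i) - L (y - x$i)\<bar>"
        using abs_triangle_ineq[of "g y - G y" "G y - G (x$i) - L (y - x$i)"] g0 G0 by simp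
      ultimately have "\<bar>g y - g (x$i) - L (y - x$i)\<bar> \<le> e / 2 * norm (y - x$i) + e / 2 * norm (y - x$i)"
        using k by simp
      then show "norm (g y - g (x$i) - L (y - x$i)) \<le> e * norm (y - x$i)" by simp
    qed (fact d0)
  qed
  then show ?thesis unfolding g_def xs_def L_def M_def .
qed

end
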